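(* Let $R$ be a ring with identity and $a,b,c\in R$. Then: (i) if $a$ is right annihilator $(b,c)$-invertible, then $b^\circ=(cab)^\circ$; (ii) if $a$ is left annihilator $(b,c)$-invertible, then ${}^\circ c={}^\circ(cab)$.
   Context: For $x\in R$: $x^\circ=\{r\in R: xr=0\}$, ${}^\circ x=\{r\in R: rx=0\}$. The element $a$ is right annihilator $(b,c)$-invertible if there is $y\in R$ with $c^\circ\subseteq y^\circ$ and $yab=b$; left annihilator $(b,c)$-invertible if there is $y\in R$ with ${}^\circ b\subseteq {}^\circ y$ and $cay=c$. *)

theory Defs
  imports Main
begin

definition rann :: "'a::ring_1 \<Rightarrow> 'a set" where
  "rann x = {r. x * r = 0}"

definition lann :: "'a::ring_1 \<Rightarrow> 'a set" where
  "lann x = {r. r * x = 0}"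

definition right_ann_bc_invertible :: "'a::ring_1 \<Rightarrow> 'a \<Rightarrow> 'a \<Rightarrow> bool" where
  "right_ann_bc_invertible a b c \<longleftrightarrow> (\<exists>y. rann c \<subseteq> rann y \<and> y * a * b = b)"

definition left_ann_bc_invertible :: "'a::ring_1 \<Rightarrow> 'a \<Rightarrow> 'a \<Rightarrow> bool" where
  "left_ann_bc_invertible a b c \<longleftrightarrow> (\<exists>y. lann b \<subseteq> lann y \<and> c * a * y = c)"

end

theory Submission
  imports Defs
begin

theorem proposition2p9:
  fixes a b c :: "'a::ring_1"
  shows "(right_ann_bc_invertible a b c \<longrightarrow> rann b = rann (c * a * b))
       \<and> (left_ann_bc_invertible a b c \<longrightarrow> lann c = lann (c * a * b))"
proof (intro conjI impI)
  assume "right_ann_bc_invertible a b c"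
  then obtain y where y: "rann c \<subseteq> rann y" "y * a * b = b"
    unfolding right_ann_bc_invertible_def by blast
  show "rann b = rann (c * a * b)"
  proof
    show "rann b \<subseteq> rann (c * a * b)"
      by (auto simp: rann_def mult.assoc)
  next
    show "rann (c * a * b) \<subseteq> rann b"
    proof
      fix r assume "r \<in> rann (c * a * b)"
      then have "a * b * r \<in> rann c" by (simp add: rann_def mult.assoc)
      then have "y * (a * b * r) = 0" using y(1) by (auto simp: rann_def)
      then have "b * r = 0" using y(2) by (metis mult.assoc)
      then show "r \<in> rann b" by (simp add: rann_def)
    qed
  qed
next
  assume "left_ann_bc_invertible a b c"
  then obtain y where y: "lann b \<subseteq> lann y" "c * a * y = c"
    unfolding left_ann_bc_invertible_def by blast
  show "lann c = lann (c * a * b)"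
  proof
    show "lann c \<subseteq> lann (c * a * b)"
      by (auto simp: lann_def mult.assoc[symmetric])
  next
    show "lann (c * a * b) \<subseteq> lann c"
    proof
      fix r assume "r \<in> lann (c * a * b)"
      then have "r * c * a \<in> lann b" by (simp add: lann_def mult.assoc)
      then have "r * c * a * y = 0" using y(1) by (auto simp: lann_def)
      then have "r * c = 0" using y(2) by (metis mult.assoc)
      then show "r \<in> lann c" by (simp add: lann_def)
    qed
  qed
qed

end
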